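(* Let $(P,\preceq)$ be a locally finite meet semilattice, $S\subseteq P$ a finite meet closed set, and suppose $x_i\in S$ generates a double-chain set in $S$, with $\mathrm{meetcl}(C_S(x_i))\setminus C_S(x_i)=A_i\cup B_i$ where $A_i,B_i$ are disjoint chains. Then there is at most one element $z\in C_S(x_i)$ that attaches to both $A_i$ and $B_i$.
   Context: $C_S(x)$ is the set of elements of $S$ covered by $x$ in $S$; $\mathrm{meetcl}(C)$ is the set of all finite meets of elements of $C$. An element $x\in S$ generates a double-chain set in $S$ if $\mathrm{meetcl}(C_S(x))\setminus C_S(x)$ is a union of two disjoint (possibly empty) chains. Given such chains $A_i,B_i$ for $x_i$, an element $z\in C_S(x_i)$ attaches to $A_i$ (resp. $B_i$) if there is $a\in A_i$ (resp. $b\in B_i$) that is covered by $z$ in the poset $\mathrm{meetcl}(C_S(x_i))$. *)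

theory Defs
  imports Main
begin

definition locally_finite :: "'a::order itself \<Rightarrow> bool" where
  "locally_finite _ \<longleftrightarrow> (\<forall>a b::'a. finite {x. a \<le> x \<and> x \<le> b})"

definition meet_closed :: "'a::semilattice_inf set \<Rightarrow> bool" where
  "meet_closed S \<longleftrightarrow> (\<forall>a\<in>S. \<forall>b\<in>S. inf a b \<in> S)"

definition covered_in :: "'a::order set \<Rightarrow> 'a \<Rightarrow> 'a \<Rightarrow> bool" where
  "covered_in T y x \<longleftrightarrow> y \<in> T \<and> x \<in> T \<and> y < x \<and> \<not> (\<exists>z\<in>T. y < z \<and> z < x)"

definition covset :: "'a::order set \<Rightarrow> 'a \<Rightarrow> 'a set" where
  "covset S x = {y. covered_in S y x}"

definition meetcl :: "'a::semilattice_inf set \<Rightarrow> 'a set" where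
  "meetcl C = {Inf_fin D | D. D \<subseteq> C \<and> finite D \<and> D \<noteq> {}}"

definition is_chain :: "'a::order set \<Rightarrow> bool" where
  "is_chain A \<longleftrightarrow> (\<forall>a\<in>A. \<forall>b\<in>A. a \<le> b \<or> b \<le> a)"

definition attaches :: "'a::semilattice_inf set \<Rightarrow> 'a \<Rightarrow> 'a \<Rightarrow> 'a set \<Rightarrow> bool" where
  "attaches S x z A \<longleftrightarrow> (\<exists>a\<in>A. covered_in (meetcl (covset S x)) a z)"

end

theory Submission
  imports Defs
begin

lemma cov_eq:
  fixes M :: "'a::semilattice_inf set"
  assumes "covered_in M a z1" "a \<le> z2" "inf z1 z2 \<in> M" "\<not> z1 \<le> z2"
  shows "a = inf z1 z2"
proof -
  have "a \<le> inf z1 z2" using assms unfolding covered_in_def by auto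
  moreover have "inf z1 z2 < z1" using assms(4) by (metis inf.absorb_iff1 inf_le1 le_less)
  ultimately show ?thesis using assms(1,3) unfolding covered_in_def by (metis le_less)
qed

theorem lemma2p3:
  fixes S :: "'a::semilattice_inf set" and x :: 'a and A B :: "'a set"
  assumes "locally_finite TYPE('a)"
    and "finite S" and "meet_closed S"
    and "x \<in> S"
    and "meetcl (covset S x) - covset S x = A \<union> B"
    and "A \<inter> B = {}" and "is_chain A" and "is_chain B"
  shows "\<forall>z1 z2. z1 \<in> covset S x \<and> attaches S x z1 A \<and> attaches S x z1 B
           \<and> z2 \<in> covset S x \<and> attaches S x z2 A \<and> attaches S x z2 B \<longrightarrow> z1 = z2"
proof (intro allI impI)
  fix z1 z2
  assume H: "z1 \<in> covset S x \<and> attaches S x z1 A \<and> attaches S x z1 B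
           \<and> z2 \<in> covset S x \<and> attaches S x z2 A \<and> attaches S x z2 B"
  let ?M = "meetcl (covset S x)"
  show "z1 = z2"
  proof (rule ccontr)
    assume ne: "z1 \<noteq> z2"
    have c1: "covered_in S z1 x" and c2: "covered_in S z2 x" using H by (auto simp: covset_def)
    have n12: "\<not> z1 \<le> z2" using c1 c2 ne unfolding covered_in_def by (metis le_less)
    have n21: "\<not> z2 \<le> z1" using c1 c2 ne unfolding covered_in_def by (metis le_less)
    have wM: "inf z1 z2 \<in> ?M" unfolding meetcl_def
      apply (rule CollectI, rule exI[of _ "{z1,z2}"]) using H by auto
    have wM': "inf z2 z1 \<in> ?M" using wM by (simp add: inf_commute)
    obtain a1 b1 a2 b2 where a1: "a1 \<in> A" "covered_in ?M a1 z1" and b1: "b1 \<in> B" "covered_in ?M b1 z1"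
      and a2: "a2 \<in> A" "covered_in ?M a2 z2" and b2: "b2 \<in> B" "covered_in ?M b2 z2"
      using H unfolding attaches_def by blast
    have le: "a1 \<le> z1" "b1 \<le> z1" "a2 \<le> z2" "b2 \<le> z2"
      using a1 b1 a2 b2 unfolding covered_in_def by auto
    have ea: "a1 = inf z1 z2 \<or> a2 = inf z1 z2"
    proof -
      have "a1 \<le> a2 \<or> a2 \<le> a1" using assms(7) a1 a2 unfolding is_chain_def by blast
      thus ?thesis
      proof
        assume "a1 \<le> a2" hence "a1 \<le> z2" using le by auto
        thus ?thesis using cov_eq[OF a1(2) _ wM n12] by auto
      next
        assume "a2 \<le> a1" hence "a2 \<le> z1" using le by auto
        thus ?thesis using cov_eq[OF a2(2) _ wM' n21] by (auto simp: inf_commute)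
      qed
    qed
    have eb: "b1 = inf z1 z2 \<or> b2 = inf z1 z2"
    proof -
      have "b1 \<le> b2 \<or> b2 \<le> b1" using assms(8) b1 b2 unfolding is_chain_def by blast
      thus ?thesis
      proof
        assume "b1 \<le> b2" hence "b1 \<le> z2" using le by auto
        thus ?thesis using cov_eq[OF b1(2) _ wM n12] by auto
      next
        assume "b2 \<le> b1" hence "b2 \<le> z1" using le by auto
        thus ?thesis using cov_eq[OF b2(2) _ wM' n21] by (auto simp: inf_commute)
      qed
    qed
    show False using ea eb a1(1) a2(1) b1(1) b2(1) assms(6) by auto
  qed
qed

end
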